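(* Fix a constant $c>0$. There is a constant $C$ (depending only on $c$) such that for every $n=2^k$ and every $c$-Ramsey graph $G$ with $n$ vertices, the formula $\Psi_G$ has a treelike resolution refutation with at most $n^{C\log n}$ clauses; i.e. of size $n^{O(\log n)}$.
   Context: Logarithms are base 2. A graph $G$ on $n$ vertices is $c$-Ramsey if no set of $c\log n$ vertices is a clique or an independent set. A resolution refutation of a CNF is a sequence of clauses, each a clause of the formula or derived from earlier clauses $A\lor x$, $B\lor\neg x$ as $A\lor B$, ending in the empty clause; it is treelike if each derived clause is used as a premise at most once. For a graph $G$ on $n=2^k$ vertices, identify vertices with strings $v=v_1\cdots v_k\in\{0,1\}^k$ (assume $ck$ is an integer). $\Psi_G$ has variables $x^i_b$ ($i\in[ck]$, $b\in[k]$) and $y$; $(x^i_b\ne v_b)$ denotes $\neg x^i_b$ if $v_b=1$ and $x^i_b$ if $v_b=0$. Clauses: (1) for each vertex $v$ and distinct $i,j$: $\bigvee_b(x^i_b\ne v_b)\lor\bigvee_b(x^j_b\ne v_b)$; (2) for distinct $u,v$ with $\{u,v\}\in E(G)$ and distinct $i,j$: $y\lor\bigvee_b(x^i_b\ne u_b)\lor\bigvee_b(x^j_b\ne v_b)$; (3) for distinct $u,v$ with $\{u,v\}\notin E(G)$ and distinct $i,j$: $\neg y\lor\bigvee_b(x^i_b\ne u_b)\lor\bigvee_b(x^j_b\ne v_b)$. *)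

theory Defs
  imports Complex_Main
begin

datatype var = X nat nat | Y   \<comment> \<open>X i b is x^i_b, Y is y\<close>

type_synonym lit = "var \<times> bool"   \<comment> \<open>(v, True) = v, (v, False) = not v\<close>
type_synonym clause = "lit set"      \<comment> \<open>a clause is the disjunction of its literals\<close>

definition resolvent :: "clause \<Rightarrow> clause \<Rightarrow> clause \<Rightarrow> bool" where
  "resolvent C1 C2 D \<longleftrightarrow>
     (\<exists>x. (x, True) \<in> C1 \<and> (x, False) \<in> C2 \<and> D = (C1 - {(x, True)}) \<union> (C2 - {(x, False)}))"

datatype just = Ax | Res nat nat

type_synonym proof_seq = "(clause \<times> just) list"

definition refutation :: "clause set \<Rightarrow> proof_seq \<Rightarrow> bool" where
  "refutation F P \<longleftrightarrow> P \<noteq> [] \<and> fst (last P) = {} \<and>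
     (\<forall>p < length P. case snd (P ! p) of
        Ax \<Rightarrow> fst (P ! p) \<in> F
      | Res i j \<Rightarrow> i < p \<and> j < p \<and> resolvent (fst (P ! i)) (fst (P ! j)) (fst (P ! p)))"

definition uses :: "proof_seq \<Rightarrow> nat \<Rightarrow> nat" where
  "uses P q = (\<Sum>p<length P. case snd (P ! p) of Ax \<Rightarrow> 0
        | Res i j \<Rightarrow> (if i = q then 1 else 0) + (if j = q then 1 else 0))"

definition treelike_refutation :: "clause set \<Rightarrow> proof_seq \<Rightarrow> bool" where
  "treelike_refutation F P \<longleftrightarrow> refutation F P \<and>
     (\<forall>q < length P. snd (P ! q) \<noteq> Ax \<longrightarrow> uses P q \<le> 1)"

definition verts :: "nat \<Rightarrow> bool list set" where
  "verts k = {v. length v = k}"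

definition graph_on :: "nat \<Rightarrow> (bool list \<Rightarrow> bool list \<Rightarrow> bool) \<Rightarrow> bool" where
  "graph_on k E \<longleftrightarrow> (\<forall>u \<in> verts k. \<forall>v \<in> verts k. E u v \<longleftrightarrow> E v u) \<and> (\<forall>v \<in> verts k. \<not> E v v)"

definition is_clique :: "(bool list \<Rightarrow> bool list \<Rightarrow> bool) \<Rightarrow> bool list set \<Rightarrow> bool" where
  "is_clique E S \<longleftrightarrow> (\<forall>u\<in>S. \<forall>v\<in>S. u \<noteq> v \<longrightarrow> E u v)"

definition is_indep :: "(bool list \<Rightarrow> bool list \<Rightarrow> bool) \<Rightarrow> bool list set \<Rightarrow> bool" where
  "is_indep E S \<longleftrightarrow> (\<forall>u\<in>S. \<forall>v\<in>S. u \<noteq> v \<longrightarrow> \<not> E u v)"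

definition c_ramsey :: "real \<Rightarrow> nat \<Rightarrow> (bool list \<Rightarrow> bool list \<Rightarrow> bool) \<Rightarrow> bool" where
  "c_ramsey c k E \<longleftrightarrow> (\<forall>S \<subseteq> verts k. real (card S) = c * log 2 (real (2 ^ k)) \<longrightarrow>
       \<not> is_clique E S \<and> \<not> is_indep E S)"

text \<open>neq i v is the disjunction over b<k of (x^i_b \<noteq> v_b); bit v_b is v ! b (True = 1).\<close>
definition neq :: "nat \<Rightarrow> nat \<Rightarrow> bool list \<Rightarrow> clause" where
  "neq k i v = {(X i b, \<not> (v ! b)) | b. b < k}"

text \<open>Psi k m E, where m = c k is the number of indices i.\<close>
definition Psi :: "nat \<Rightarrow> nat \<Rightarrow> (bool list \<Rightarrow> bool list \<Rightarrow> bool) \<Rightarrow> clause set" where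
  "Psi k m E =
     {neq k i v \<union> neq k j v | v i j. v \<in> verts k \<and> i < m \<and> j < m \<and> i \<noteq> j}
   \<union> {insert (Y, True) (neq k i u \<union> neq k j v) | u v i j.
        u \<in> verts k \<and> v \<in> verts k \<and> u \<noteq> v \<and> E u v \<and> i < m \<and> j < m \<and> i \<noteq> j}
   \<union> {insert (Y, False) (neq k i u \<union> neq k j v) | u v i j.
        u \<in> verts k \<and> v \<in> verts k \<and> u \<noteq> v \<and> \<not> E u v \<and> i < m \<and> j < m \<and> i \<noteq> j}"

end

theory Submission
  imports Defs
begin

definition falsif :: "(var \<Rightarrow> bool) \<Rightarrow> clause \<Rightarrow> bool" where
  "falsif \<alpha> C \<longleftrightarrow> (\<forall>(y,s)\<in>C. \<alpha> y \<noteq> s)"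

definition deriv :: "clause set \<Rightarrow> proof_seq \<Rightarrow> bool" where
  "deriv F P \<longleftrightarrow> (\<forall>p < length P. case snd (P ! p) of
        Ax \<Rightarrow> fst (P ! p) \<in> F
      | Res i j \<Rightarrow> i < p \<and> j < p \<and> resolvent (fst (P ! i)) (fst (P ! j)) (fst (P ! p)))"

definition uline :: "nat \<Rightarrow> clause \<times> just \<Rightarrow> nat" where
  "uline q l = (case snd l of Ax \<Rightarrow> 0
        | Res i j \<Rightarrow> (if i = q then 1 else 0) + (if j = q then 1 else 0))"

definition us :: "proof_seq \<Rightarrow> nat \<Rightarrow> nat" where
  "us P q = sum_list (map (uline q) P)"

lemma uses_us: "uses P q = us P q"
  unfolding uses_def us_def uline_def
  by (simp add: sum_list_sum_nth atLeast0LessThan)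

definition shiftj :: "nat \<Rightarrow> just \<Rightarrow> just" where
  "shiftj n j = (case j of Ax \<Rightarrow> Ax | Res a b \<Rightarrow> Res (a+n) (b+n))"

definition shift :: "nat \<Rightarrow> proof_seq \<Rightarrow> proof_seq" where
  "shift n P = map (\<lambda>l. (fst l, shiftj n (snd l))) P"

lemma uline_shift: "uline q (fst l, shiftj n (snd l)) = (if q < n then 0 else uline (q - n) l)"
  unfolding uline_def shiftj_def by (cases "snd l") auto

lemma us_shift: "us (shift n P) q = (if q < n then 0 else us P (q - n))"
  unfolding us_def shift_def by (induction P) (auto simp: uline_shift)

lemma us_append: "us (A @ B) q = us A q + us B q"
  unfolding us_def by simp

lemma us_beyond:
  assumes "deriv F A" "length A \<le> q"
  shows "us A q = 0"
proof -
  have "\<forall>l\<in>set A. uline q l = 0"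
  proof
    fix l assume "l \<in> set A"
    then obtain p where p: "p < length A" "A ! p = l" by (auto simp: in_set_conv_nth)
    show "uline q l = 0"
    proof (cases "snd l")
      case Ax then show ?thesis by (simp add: uline_def)
    next
      case (Res i j)
      with assms(1) p have "i < p" "j < p" unfolding deriv_def by (auto split: just.splits)
      with p assms(2) Res show ?thesis by (simp add: uline_def)
    qed
  qed
  then show ?thesis unfolding us_def by (simp add: sum_list_eq_0_iff)
qed

lemma combine:
  assumes dA: "deriv F A" and dB: "deriv F B" and nA: "A \<noteq> []" and nB: "B \<noteq> []"
    and uA: "\<forall>q<length A. us A q \<le> 1" and uB: "\<forall>q<length B. us B q \<le> 1"
    and lA: "us A (length A - 1) = 0" and lB: "us B (length B - 1) = 0"
    and res: "resolvent (fst (last A)) (fst (last B)) D"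
    and P: "P = A @ shift (length A) B @ [(D, Res (length A - 1) (length A + length B - 1))]"
  shows "deriv F P" "\<forall>q<length P. us P q \<le> 1" "us P (length P - 1) = 0"
    "length P = length A + length B + 1" "last P = (D, Res (length A - 1) (length A + length B - 1))"
proof -
  define a where "a = length A"
  define b where "b = length B"
  have a0: "a > 0" "b > 0" using nA nB a_def b_def by auto
  have pl: "0 < length A" "0 < length B" using nA nB by auto
  have len: "length P = a + b + 1" using P a_def b_def by (simp add: shift_def)
  then show "length P = length A + length B + 1" using a_def b_def by simp
  show "last P = (D, Res (length A - 1) (length A + length B - 1))" using P by simp
  have nthA: "P ! p = A ! p" if "p < a" for p
    using that P a_def by (simp add: nth_append)
  have nthB: "P ! p = (fst (B ! (p - a)), shiftj a (snd (B ! (p - a))))" if "a \<le> p" "p < a + b" for p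
    using that P a_def b_def by (auto simp: nth_append shift_def)
  have nthL: "P ! (a + b) = (D, Res (a - 1) (a + b - 1))"
    using P a_def b_def by (simp add: nth_append shift_def)
  show "deriv F P" unfolding deriv_def
  proof (intro allI impI)
    fix p assume p: "p < length P"
    show "case snd (P ! p) of Ax \<Rightarrow> fst (P ! p) \<in> F
      | Res i j \<Rightarrow> i < p \<and> j < p \<and> resolvent (fst (P ! i)) (fst (P ! j)) (fst (P ! p))"
    proof (cases "p < a")
      case True
      have "case snd (A ! p) of Ax \<Rightarrow> fst (A ! p) \<in> F
      | Res i j \<Rightarrow> i < p \<and> j < p \<and> resolvent (fst (A ! i)) (fst (A ! j)) (fst (A ! p))"
        using dA True a_def unfolding deriv_def by auto
      then show ?thesis using True nthA by (auto split: just.splits)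
    next
      case False
      show ?thesis
      proof (cases "p < a + b")
        case True
        have h: "case snd (B ! (p - a)) of Ax \<Rightarrow> fst (B ! (p - a)) \<in> F
          | Res i j \<Rightarrow> i < p - a \<and> j < p - a \<and> resolvent (fst (B ! i)) (fst (B ! j)) (fst (B ! (p - a)))"
          using dB True False b_def unfolding deriv_def by auto
        show ?thesis
        proof (cases "snd (B ! (p - a))")
          case Ax
          then show ?thesis using h nthB[of p] True False by (simp add: shiftj_def)
        next
          case (Res i j)
          have "P ! (i + a) = (fst (B ! i), shiftj a (snd (B ! i)))"
            using nthB[of "i + a"] h Res True False by auto
          moreover have "P ! (j + a) = (fst (B ! j), shiftj a (snd (B ! j)))"
            using nthB[of "j + a"] h Res True False by auto
          ultimately show ?thesis using h Res nthB[of p] True False by (auto simp add: shiftj_def)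
        qed
      next
        case False2: False
        then have pe: "p = a + b" using p len False by simp
        have "last A = A ! (a - 1)" using nA a_def by (simp add: last_conv_nth)
        moreover have "last B = B ! (b - 1)" using nB b_def by (simp add: last_conv_nth)
        moreover have "P ! (a - 1) = A ! (a - 1)" using nthA a0 by simp
        moreover have "P ! (a + b - 1) = (fst (B ! (b - 1)), shiftj a (snd (B ! (b - 1))))"
          using nthB[of "a + b - 1"] a0 by simp
        ultimately show ?thesis using pe nthL res a0 by simp
      qed
    qed
  qed
  have usP: "us P q = us A q + us (shift a B) q + uline q (D, Res (a - 1) (a + b - 1))" for q
    using P a_def b_def by (simp add: us_append us_def)
  show "\<forall>q<length P. us P q \<le> 1"
  proof (intro allI impI)
    fix q assume q: "q < length P"
    show "us P q \<le> 1"
    proof (cases "q < a")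
      case True
      have ne: "a + b - 1 \<noteq> q" using True a0 by simp
      have "uline q (D, Res (a - 1) (a + b - 1)) \<le> (if q = a - 1 then 1 else 0)"
        using ne by (simp add: uline_def)
      then show ?thesis using usP[of q] us_shift[of a B q] uA a_def lA True
        by (cases "q = a - 1") auto
    next
      case False
      have "us A q = 0" using us_beyond[OF dA] False a_def by simp
      then show ?thesis
      proof (cases "q < a + b")
        case True
        then show ?thesis using usP[of q] us_shift[of a B q] uB b_def lB False \<open>us A q = 0\<close> a0 pl
          by (cases "q = a + b - 1") (auto simp: uline_def)
      next
        case False
        then have "q = a + b" using q len by simp
        then show ?thesis using usP[of q] us_shift[of a B q] \<open>us A q = 0\<close> us_beyond[OF dB, of b] b_def a0
          by (simp add: uline_def)
      qed
    qed
  qed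
  have e1: "a - 1 \<noteq> a + b" "a + b - 1 \<noteq> a + b" using a0 by auto
  have e2: "us A (a + b) = 0" using us_beyond[OF dA, of "a+b"] a_def by simp
  have e3: "us B b = 0" using us_beyond[OF dB, of b] b_def by simp
  have "us P (a + b) = 0"
    using usP[of "a+b"] us_shift[of a B "a+b"] e1 e2 e3 by (simp add: uline_def)
  then show "us P (length P - 1) = 0" using len by simp
qed


definition good :: "clause set \<Rightarrow> clause \<Rightarrow> (var \<Rightarrow> bool) \<Rightarrow> var list \<Rightarrow> proof_seq \<Rightarrow> bool" where
  "good F U \<rho> vs P \<longleftrightarrow> P \<noteq> [] \<and> deriv F P \<and> (\<forall>q<length P. us P q \<le> 1) \<and> us P (length P - 1) = 0
     \<and> fst (last P) \<subseteq> U \<and> (\<forall>(y,s)\<in>fst (last P). y \<notin> set vs \<and> \<rho> y \<noteq> s)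
     \<and> length P + 1 \<le> 2 ^ (length vs + 1)"

lemma main_ind:
  assumes FU: "\<forall>C\<in>F. C \<subseteq> U"
  shows "(\<forall>\<alpha>. (\<forall>x. x \<notin> set vs \<longrightarrow> \<alpha> x = \<rho> x) \<longrightarrow> (\<exists>C\<in>F. falsif \<alpha> C))
     \<Longrightarrow> \<exists>P. good F U \<rho> vs P"
proof (induction vs arbitrary: \<rho>)
  case Nil
  then obtain C where C: "C \<in> F" "falsif \<rho> C" by auto
  let ?P = "[(C, Ax)]"
  have "deriv F ?P" using C unfolding deriv_def by auto
  moreover have "us ?P 0 = 0" by (simp add: us_def uline_def)
  ultimately show ?case using C FU unfolding good_def falsif_def by (intro exI[of _ ?P]) auto
next
  case (Cons x vs)
  have hyp: "\<forall>\<alpha>. (\<forall>z. z \<notin> set vs \<longrightarrow> \<alpha> z = (\<rho>(x:=b)) z) \<longrightarrow> (\<exists>C\<in>F. falsif \<alpha> C)" for b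
  proof (intro allI impI)
    fix \<alpha> assume a: "\<forall>z. z \<notin> set vs \<longrightarrow> \<alpha> z = (\<rho>(x:=b)) z"
    then have "\<forall>z. z \<notin> set (x # vs) \<longrightarrow> \<alpha> z = \<rho> z" by auto
    then show "\<exists>C\<in>F. falsif \<alpha> C" using Cons.prems by blast
  qed
  obtain A where A: "good F U (\<rho>(x:=False)) vs A" using Cons.IH hyp by blast
  obtain B where B: "good F U (\<rho>(x:=True)) vs B" using Cons.IH hyp by blast
  define CA where "CA = fst (last A)"
  define CB where "CB = fst (last B)"
  have lenA: "length A + 1 \<le> 2 ^ (length vs + 1)" and lenB: "length B + 1 \<le> 2 ^ (length vs + 1)"
    using A B unfolding good_def by auto
  have litA: "\<forall>(y,s)\<in>CA. y \<notin> set vs \<and> (\<rho>(x:=False)) y \<noteq> s" using A unfolding good_def CA_def by auto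
  have litB: "\<forall>(y,s)\<in>CB. y \<notin> set vs \<and> (\<rho>(x:=True)) y \<noteq> s" using B unfolding good_def CB_def by auto
  show ?case
  proof (cases "(x, True) \<in> CA")
    case False
    have "\<forall>(y,s)\<in>CA. y \<notin> set (x#vs) \<and> \<rho> y \<noteq> s"
    proof (intro ballI, clarify)
      fix y s assume ys: "(y, s) \<in> CA"
      show "y \<notin> set (x # vs) \<and> \<rho> y \<noteq> s"
      proof (cases "y = x")
        case True
        then show ?thesis using litA ys False by (cases s) auto
      next
        case False
        then show ?thesis using litA ys by auto
      qed
    qed
    moreover have "length A + 1 \<le> 2 ^ (length (x#vs) + 1)"
      using lenA by (simp add: power_Suc)
    ultimately have "good F U \<rho> (x#vs) A" using A unfolding good_def CA_def by auto
    then show ?thesis by blast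
  next
    case TA: True
    show ?thesis
    proof (cases "(x, False) \<in> CB")
      case False
      have "\<forall>(y,s)\<in>CB. y \<notin> set (x#vs) \<and> \<rho> y \<noteq> s"
      proof (intro ballI, clarify)
        fix y s assume ys: "(y, s) \<in> CB"
        show "y \<notin> set (x # vs) \<and> \<rho> y \<noteq> s"
        proof (cases "y = x")
          case True
          then show ?thesis using litB ys False by (cases s) auto
        next
          case False
          then show ?thesis using litB ys by auto
        qed
      qed
      moreover have "length B + 1 \<le> 2 ^ (length (x#vs) + 1)"
        using lenB by (simp add: power_Suc)
      ultimately have "good F U \<rho> (x#vs) B" using B unfolding good_def CB_def by auto
      then show ?thesis by blast
    next
      case TB: True
      define D where "D = (CA - {(x, True)}) \<union> (CB - {(x, False)})"
      have res: "resolvent CA CB D" unfolding resolvent_def D_def using TA TB by blast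
      define P where "P = A @ shift (length A) B @ [(D, Res (length A - 1) (length A + length B - 1))]"
      note cb = combine[OF _ _ _ _ _ _ _ _ res[unfolded CA_def CB_def] P_def]
      have c: "deriv F P" "\<forall>q<length P. us P q \<le> 1" "us P (length P - 1) = 0"
          "length P = length A + length B + 1" "last P = (D, Res (length A - 1) (length A + length B - 1))"
        using cb A B unfolding good_def by auto
      have "D \<subseteq> U" using A B unfolding good_def D_def CA_def CB_def by auto
      moreover have "\<forall>(y,s)\<in>D. y \<notin> set (x#vs) \<and> \<rho> y \<noteq> s"
      proof (intro ballI, clarify)
        fix y s assume ys: "(y, s) \<in> D"
        show "y \<notin> set (x # vs) \<and> \<rho> y \<noteq> s"
        proof (cases "y = x")
          case True
          then show ?thesis using litA litB ys unfolding D_def by (cases s) auto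
        next
          case False
          then show ?thesis using litA litB ys unfolding D_def by auto
        qed
      qed
      moreover have "length P + 1 \<le> 2 ^ (length (x#vs) + 1)"
        using lenA lenB c(4) by (simp add: power_Suc)
      ultimately have "good F U \<rho> (x#vs) P" using c unfolding good_def by auto
      then show ?thesis by blast
    qed
  qed
qed


lemma falsif_neq: "falsif \<alpha> (neq k i (map (\<lambda>b. \<alpha> (X i b)) [0..<k]))"
  unfolding falsif_def neq_def by auto

lemma falsif_Un: "falsif \<alpha> A \<Longrightarrow> falsif \<alpha> B \<Longrightarrow> falsif \<alpha> (A \<union> B)"
  unfolding falsif_def by auto

lemma falsif_ins: "\<alpha> y \<noteq> s \<Longrightarrow> falsif \<alpha> B \<Longrightarrow> falsif \<alpha> (insert (y, s) B)"
  unfolding falsif_def by auto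

lemma psi_unsat:
  assumes m: "real m = c * log 2 (real (2 ^ k))" and R: "c_ramsey c k E"
  shows "\<exists>C\<in>Psi k m E. falsif \<alpha> C"
proof -
  define vtx where "vtx i = map (\<lambda>b. \<alpha> (X i b)) [0..<k]" for i
  have vv: "vtx i \<in> verts k" for i unfolding vtx_def verts_def by simp
  have fv: "falsif \<alpha> (neq k i (vtx i))" for i unfolding vtx_def by (rule falsif_neq)
  show ?thesis
  proof (cases "inj_on vtx {..<m}")
    case False
    then obtain i j where ij: "i < m" "j < m" "i \<noteq> j" "vtx i = vtx j"
      unfolding inj_on_def by auto
    have "neq k i (vtx i) \<union> neq k j (vtx i) \<in> Psi k m E"
      unfolding Psi_def using ij vv by blast
    moreover have "falsif \<alpha> (neq k i (vtx i) \<union> neq k j (vtx i))"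
      using fv[of i] fv[of j] ij by (simp add: falsif_Un)
    ultimately show ?thesis by blast
  next
    case True
    define S where "S = vtx ` {..<m}"
    have "card S = m" using True S_def by (simp add: card_image)
    moreover have "S \<subseteq> verts k" using vv S_def by auto
    ultimately have nc: "\<not> is_clique E S \<and> \<not> is_indep E S" using R m unfolding c_ramsey_def by auto
    show ?thesis
    proof (cases "\<alpha> Y")
      case Yt: True
      from nc obtain u v where uv: "u \<in> S" "v \<in> S" "u \<noteq> v" "\<not> E u v" unfolding is_clique_def by auto
      then obtain i j where ij: "i < m" "j < m" "u = vtx i" "v = vtx j" unfolding S_def by auto
      with uv have "i \<noteq> j" by auto
      then have "insert (Y, False) (neq k i u \<union> neq k j v) \<in> Psi k m E"
        unfolding Psi_def using ij uv vv by blast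
      moreover have "falsif \<alpha> (insert (Y, False) (neq k i u \<union> neq k j v))"
        using fv[of i] fv[of j] ij Yt by (simp add: falsif_Un falsif_ins)
      ultimately show ?thesis by blast
    next
      case Yf: False
      from nc obtain u v where uv: "u \<in> S" "v \<in> S" "u \<noteq> v" "E u v" unfolding is_indep_def by auto
      then obtain i j where ij: "i < m" "j < m" "u = vtx i" "v = vtx j" unfolding S_def by auto
      with uv have "i \<noteq> j" by auto
      then have "insert (Y, True) (neq k i u \<union> neq k j v) \<in> Psi k m E"
        unfolding Psi_def using ij uv vv by blast
      moreover have "falsif \<alpha> (insert (Y, True) (neq k i u \<union> neq k j v))"
        using fv[of i] fv[of j] ij Yf by (simp add: falsif_Un falsif_ins)
      ultimately show ?thesis by blast
    qed
  qed
qed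

definition vlist :: "nat \<Rightarrow> nat \<Rightarrow> var list" where
  "vlist k m = concat (map (\<lambda>i. map (X i) [0..<k]) [0..<m]) @ [Y]"

lemma vlist_len: "length (vlist k m) = m * k + 1"
  unfolding vlist_def by (simp add: length_concat o_def sum_list_triv)

lemma psi_sub: "\<forall>C\<in>Psi k m E. C \<subseteq> {l :: lit. fst l \<in> set (vlist k m)}"
  unfolding Psi_def neq_def vlist_def by (auto simp: image_iff)

theorem mainTheorem2:
  fixes c :: real
  assumes "c > 0"
  shows "\<exists>C::real. \<forall>(k::nat) (m::nat) (E :: bool list \<Rightarrow> bool list \<Rightarrow> bool).
           real m = c * log 2 (real (2 ^ k)) \<longrightarrow> graph_on k E \<longrightarrow> c_ramsey c k E \<longrightarrow>
           (\<exists>P. treelike_refutation (Psi k m E) P \<and>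
                real (length P) \<le> real (2 ^ k) powr (C * log 2 (real (2 ^ k))))"
proof (intro exI[of _ "c + 2"] allI impI)
  fix k m E
  assume m: "real m = c * log 2 (real (2 ^ k))" and g: "graph_on k E" and R: "c_ramsey c k E"
  have lg: "log 2 (real (2 ^ k)) = real k" by simp
  have k1: "k \<ge> 1"
  proof (rule ccontr)
    assume "\<not> k \<ge> 1"
    then have k0: "k = 0" by simp
    have "real (card ({}::bool list set)) = c * log 2 (real (2 ^ k))" using k0 by simp
    then show False using R unfolding c_ramsey_def is_clique_def by auto
  qed
  define U where "U = {l :: lit. fst l \<in> set (vlist k m)}"
  obtain P where P: "good (Psi k m E) U (\<lambda>_. False) (vlist k m) P"
  proof -
    have "\<forall>C\<in>Psi k m E. C \<subseteq> U" using psi_sub[of k m E] U_def by simp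
    from main_ind[OF this, of "vlist k m" "\<lambda>_. False"] psi_unsat[OF m R]
    show ?thesis using that by blast
  qed
  have e: "fst (last P) = {}"
  proof -
    have "\<forall>(y,s)\<in>fst (last P). y \<notin> set (vlist k m)" "fst (last P) \<subseteq> U"
      using P unfolding good_def by auto
    then show ?thesis unfolding U_def by fastforce
  qed
  have tr: "treelike_refutation (Psi k m E) P"
    using P e unfolding treelike_refutation_def refutation_def good_def deriv_def
    by (auto simp: uses_us)
  have len: "length P + 1 \<le> 2 ^ (m * k + 2)" using P vlist_len unfolding good_def by simp
  have "real (length P) \<le> 2 ^ (m * k + 2)"
  proof -
    have "real (length P) \<le> real (2 ^ (m * k + 2))" using len by linarith
    then show ?thesis by simp
  qed
  also have "\<dots> = 2 powr real (m * k + 2)"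
    by (rule powr_realpow[symmetric]) simp
  also have "\<dots> = 2 powr (real m * real k + 2)" by (simp add: add.commute)
  also have "\<dots> \<le> 2 powr ((c + 2) * real k * real k)"
  proof (rule powr_mono)
    have "real m = c * real k" using m lg by simp
    moreover have "2 \<le> 2 * real k * real k"
    proof -
      have rk: "1 \<le> real k" using k1 by simp
      have "1 * 1 \<le> real k * real k" by (rule mult_mono) (use rk in auto)
      then show ?thesis by simp
    qed
    ultimately show "real m * real k + 2 \<le> (c + 2) * real k * real k"
      by (simp add: algebra_simps)
  qed simp
  also have "\<dots> = real (2 ^ k) powr ((c + 2) * log 2 (real (2 ^ k)))"
    by (simp add: lg powr_realpow[symmetric] powr_powr mult_ac)
  finally show "\<exists>P. treelike_refutation (Psi k m E) P \<and>
                real (length P) \<le> real (2 ^ k) powr ((c + 2) * log 2 (real (2 ^ k)))"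
    using tr by blast
qed

end
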